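(* Consider the closed multi-class BCMP network model $\mathcal{Z}$ of an AMoD system described in the context, and suppose it is a feasible solution to the OSCARR problem. Then the condition $\gamma_i=\gamma_j$ for all $i,j\in\mathcal{S}$ is equivalent to \[ \widetilde{\lambda}_i=\sum_{k\in\mathcal{D}_i}\lambda^{(k)}_{s^{(k)}}\qquad\text{for all } i\in\mathcal{S}. \]
   Context: AMoD network model. There is a finite set $\mathcal{V}$ of road intersections (vertices), a finite set $\mathcal{S}$ of stations and a finite set $\mathcal{I}$ of road links. The set of queues is $\mathcal{N}=\mathcal{S}\cup\mathcal{I}$. Each queue $i$ is a directed edge with origin vertex $\mathrm{Parent}(i)$ and destination vertex $\mathrm{Child}(i)$; a station is an edge with $\mathrm{Parent}(i)=\mathrm{Child}(i)$. Stations are single-server first-come-first-served queues and road links are infinite-server queues. For a vertex $v$ put $\mathcal{W}_v=\{j\in\mathcal{N}:\mathrm{Parent}(j)=v\}$. Demands. There are customer classes $\mathcal{Q}$ and rebalancing classes $\mathcal{R}$, with $\mathcal{K}=\mathcal{Q}\cup\mathcal{R}$. Each class $k$ has an origin station $s^{(k)}$, a destination station $t^{(k)}\ne s^{(k)}$, and an arrival rate $\lambda^{(k)}$; the notation $\lambda^{(k)}_{s^{(k)}}$ also means $\lambda^{(k)}$. Customer rates are positive and given; rebalancing rates are decision variables. Let $\mathcal{O}_i=\{k:s^{(k)}=i\}$ and $\mathcal{D}_i=\{k:t^{(k)}=i\}$. Let $\widetilde{\lambda}_i=\sum_{k\in\mathcal{O}_i}\lambda^{(k)}$, and for $k'\in\mathcal{O}_i$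 let $\widetilde{p}^{(k')}_i=\lambda^{(k')}/\widetilde{\lambda}_i$. Routing. For each class $k$, routing probabilities $\alpha^{(k)}_{i,j}\ge0$ with $\sum_j\alpha^{(k)}_{i,j}=1$ are given. The routing matrix is \[ p_{i,k;j,k'}=\begin{cases}\alpha^{(k)}_{i,j} & \text{if } k=k',\ j\in\mathcal{W}_{\mathrm{Child}(i)},\ t^{(k)}\notin\mathcal{W}_{\mathrm{Child}(i)},\\ \widetilde{p}^{(k')}_j & \text{if } j=t^{(k)},\ t^{(k)}\in\mathcal{W}_{\mathrm{Child}(i)},\ k'\in\mathcal{O}_j,\\ 0 & \text{otherwise.}\end{cases} \] Throughputs. The relative throughputs $\pi_{i,k}$ solve $\pi_{i,k}=\sum_{k'}\sum_{j\in\mathcal{N}}\pi_{j,k'}p_{j,k';i,k}$. Put $\pi_i=\sum_k\pi_{i,k}$. The base service rate $\mu^o_i$ is $\widetilde{\lambda}_i$ for stations and $1/T_i$ for road links, where $T_i>0$ is the mean free-flow travel time. The relative utilization is $\gamma_i=\sum_k\pi_{i,k}/\mu^o_i$. Road link $i$ has nominal capacity $C_i$. Throughput with $m$ vehicles. Let $\Omega^*_m=\{x\in\mathbb{N}^N:\sum_ix_i=m\}$, $c_i(a)=1$ for $i\in\mathcal{S}$, and $c_i(a)=a$ for $i\in\mathcal{I}$. Define $G(m)=\sum_{\Omega^*_m}\prod_i\gamma_i^{x_i}/\prod_{a=1}^{x_i}c_i(a)$ and $\Lambda_i(m)=\pi_iG(m-1)/G(m)$. OSCARR problem (fleet size $m$).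 Choose $\{\lambda^{(r)}\}$ and $\{\alpha^{(k)}_{ij}\}$ to minimize $\sum_{i\in\mathcal{I}}\Lambda_i(m)T_i$ subject to: (i) $\gamma_i=\gamma_j$ for all $i,j\in\mathcal{S}$; (ii) $\Lambda_i(m)T_i\le C_i$ for $i\in\mathcal{I}$; (iii) $\pi_{s^{(k)},k}=\sum_{k'}\sum_{j\in\mathcal{N}}\pi_{j,k}p_{j,k;t^{(k)},k'}$ for all $k$; (iv) the traffic equations hold; (v) the $\alpha^{(k)}$ are stochastic; (vi) $\lambda^{(r)}\ge0$. A feasible solution satisfies (i)–(vi). *)

theory Defs
  imports Complex_Main
begin

text \<open>AMoD closed BCMP network model. Queues have type 'q, vertices 'v, classes 'c.
  N = S \<union> I is the set of queues, K = Q \<union> R the set of classes.\<close>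

definition W :: "'q set \<Rightarrow> ('q \<Rightarrow> 'v) \<Rightarrow> 'v \<Rightarrow> 'q set" where
  "W N Parent v = {j \<in> N. Parent j = v}"

definition Orig :: "'c set \<Rightarrow> ('c \<Rightarrow> 'q) \<Rightarrow> 'q \<Rightarrow> 'c set" where
  "Orig K s i = {k \<in> K. s k = i}"

definition Dest :: "'c set \<Rightarrow> ('c \<Rightarrow> 'q) \<Rightarrow> 'q \<Rightarrow> 'c set" where
  "Dest K t i = {k \<in> K. t k = i}"

definition lamt :: "'c set \<Rightarrow> ('c \<Rightarrow> 'q) \<Rightarrow> ('c \<Rightarrow> real) \<Rightarrow> 'q \<Rightarrow> real" where
  "lamt K s lam i = (\<Sum>k\<in>Orig K s i. lam k)"

definition ptil :: "'c set \<Rightarrow> ('c \<Rightarrow> 'q) \<Rightarrow> ('c \<Rightarrow> real) \<Rightarrow> 'c \<Rightarrow> 'q \<Rightarrow> real" where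
  "ptil K s lam k' j = lam k' / lamt K s lam j"

definition routing ::
  "'q set \<Rightarrow> 'c set \<Rightarrow> ('q \<Rightarrow> 'v) \<Rightarrow> ('q \<Rightarrow> 'v) \<Rightarrow> ('c \<Rightarrow> 'q) \<Rightarrow> ('c \<Rightarrow> 'q)
    \<Rightarrow> ('c \<Rightarrow> real) \<Rightarrow> ('c \<Rightarrow> 'q \<Rightarrow> 'q \<Rightarrow> real) \<Rightarrow> 'q \<Rightarrow> 'c \<Rightarrow> 'q \<Rightarrow> 'c \<Rightarrow> real" where
  "routing N K Parent Child s t lam alpha i k j k' =
     (if k = k' \<and> j \<in> W N Parent (Child i) \<and> t k \<notin> W N Parent (Child i) then alpha k i j
      else if j = t k \<and> t k \<in> W N Parent (Child i) \<and> k' \<in> Orig K s j then ptil K s lam k' j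
      else 0)"

definition traffic_eqs ::
  "'q set \<Rightarrow> 'c set \<Rightarrow> ('q \<Rightarrow> 'c \<Rightarrow> 'q \<Rightarrow> 'c \<Rightarrow> real) \<Rightarrow> ('q \<Rightarrow> 'c \<Rightarrow> real) \<Rightarrow> bool" where
  "traffic_eqs N K P thr =
     (\<forall>i\<in>N. \<forall>k\<in>K. thr i k = (\<Sum>k'\<in>K. \<Sum>j\<in>N. thr j k' * P j k' i k))"

definition total_thr :: "'c set \<Rightarrow> ('q \<Rightarrow> 'c \<Rightarrow> real) \<Rightarrow> 'q \<Rightarrow> real" where
  "total_thr K thr i = (\<Sum>k\<in>K. thr i k)"

definition mu0 :: "'q set \<Rightarrow> 'c set \<Rightarrow> ('c \<Rightarrow> 'q) \<Rightarrow> ('c \<Rightarrow> real) \<Rightarrow> ('q \<Rightarrow> real) \<Rightarrow> 'q \<Rightarrow> real" where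
  "mu0 S K s lam T i = (if i \<in> S then lamt K s lam i else 1 / T i)"

definition gamma ::
  "'q set \<Rightarrow> 'c set \<Rightarrow> ('c \<Rightarrow> 'q) \<Rightarrow> ('c \<Rightarrow> real) \<Rightarrow> ('q \<Rightarrow> real) \<Rightarrow> ('q \<Rightarrow> 'c \<Rightarrow> real) \<Rightarrow> 'q \<Rightarrow> real" where
  "gamma S K s lam T thr i = total_thr K thr i / mu0 S K s lam T i"

definition Omega :: "'q set \<Rightarrow> nat \<Rightarrow> ('q \<Rightarrow> nat) set" where
  "Omega N m = {x. (\<forall>i. i \<notin> N \<longrightarrow> x i = 0) \<and> (\<Sum>i\<in>N. x i) = m}"

definition cfun :: "'q set \<Rightarrow> 'q \<Rightarrow> nat \<Rightarrow> real" where
  "cfun S i a = (if i \<in> S then 1 else real a)"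

definition Gnorm :: "'q set \<Rightarrow> 'q set \<Rightarrow> ('q \<Rightarrow> real) \<Rightarrow> nat \<Rightarrow> real" where
  "Gnorm N S gam m =
     (\<Sum>x\<in>Omega N m. \<Prod>i\<in>N. gam i ^ x i / (\<Prod>a\<in>{1..x i}. cfun S i a))"

definition Lambda :: "'q set \<Rightarrow> 'q set \<Rightarrow> 'c set \<Rightarrow> ('q \<Rightarrow> real) \<Rightarrow> ('q \<Rightarrow> 'c \<Rightarrow> real)
    \<Rightarrow> nat \<Rightarrow> 'q \<Rightarrow> real" where
  "Lambda N S K gam thr m i = total_thr K thr i * Gnorm N S gam (m - 1) / Gnorm N S gam m"

end

theory Submission
  imports Defs
begin

theorem lemma2:
  fixes V :: "'v set" and S I :: "'q set" and Parent Child :: "'q \<Rightarrow> 'v"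
    and Q R :: "'c set" and s t :: "'c \<Rightarrow> 'q" and lam :: "'c \<Rightarrow> real"
    and alpha :: "'c \<Rightarrow> 'q \<Rightarrow> 'q \<Rightarrow> real" and T Cap :: "'q \<Rightarrow> real"
    and thr :: "'q \<Rightarrow> 'c \<Rightarrow> real" and m :: nat
  defines "N \<equiv> S \<union> I" and "K \<equiv> Q \<union> R"
  defines "P \<equiv> routing N K Parent Child s t lam alpha"
  defines "gam \<equiv> gamma S K s lam T thr"
  assumes fin: "finite V" "finite S" "finite I" "S \<inter> I = {}" "finite Q" "finite R" "Q \<inter> R = {}"
    and edges: "\<forall>i\<in>N. Parent i \<in> V \<and> Child i \<in> V"
    and stations: "\<forall>i\<in>S. Parent i = Child i"
    and od: "\<forall>k\<in>K. s k \<in> S \<and> t k \<in> S \<and> s k \<noteq> t k"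
    and cust_pos: "\<forall>k\<in>Q. lam k > 0"
    and T_pos: "\<forall>i\<in>I. T i > 0"
    and c_ii: "\<forall>i\<in>I. Lambda N S K gam thr m i * T i \<le> Cap i"
    and c_iii: "\<forall>k\<in>K. thr (s k) k = (\<Sum>k'\<in>K. \<Sum>j\<in>N. thr j k * P j k (t k) k')"
    and c_iv: "traffic_eqs N K P thr"
    and c_v: "\<forall>k\<in>K. \<forall>i\<in>N. (\<forall>j\<in>N. alpha k i j \<ge> 0) \<and> (\<Sum>j\<in>N. alpha k i j) = 1"
    and c_vi: "\<forall>k\<in>R. lam k \<ge> 0"
    and no_route_into_stations: "\<forall>k\<in>K. \<forall>i\<in>N. \<forall>j\<in>S. alpha k i j = 0"
    and pi_nonneg: "\<forall>i\<in>N. \<forall>k\<in>K. thr i k \<ge> 0"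
    and pi_station_pos: "\<forall>i\<in>S. total_thr K thr i > 0"
    and pi_unique: "\<forall>thr'. traffic_eqs N K P thr' \<longrightarrow> (\<exists>c. \<forall>i\<in>N. \<forall>k\<in>K. thr' i k = c * thr i k)"
  shows "(\<forall>i\<in>S. \<forall>j\<in>S. gam i = gam j) \<longleftrightarrow>
         (\<forall>i\<in>S. lamt K s lam i = (\<Sum>k\<in>Dest K t i. lam k))"
proof -
  have finN: "finite N" and finK: "finite K" using fin by (auto simp: N_def K_def)
  have SN: "S \<subseteq> N" by (auto simp: N_def)
  have Pst: "P j k' i k = (if i = t k' \<and> t k' \<in> W N Parent (Child j) \<and> s k = i then ptil K s lam k i else 0)"
    if "i\<in>S" "k\<in>K" "j\<in>N" "k'\<in>K" for i k j k'
    using that no_route_into_stations unfolding P_def routing_def Orig_def by auto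
  have gen: "(\<Sum>k'\<in>K. \<Sum>j\<in>N. f j k' * P j k' i k) = (if s k = i then ptil K s lam k i *
      (\<Sum>k'\<in>Dest K t i. \<Sum>j\<in>N. if t k' \<in> W N Parent (Child j) then f j k' else 0) else 0)"
    if "i\<in>S" "k\<in>K" for f i k
  proof -
    have "(\<Sum>k'\<in>K. \<Sum>j\<in>N. f j k' * P j k' i k) = (\<Sum>k'\<in>K. if t k' = i then (if s k = i then ptil K s lam k i *
      (\<Sum>j\<in>N. if t k' \<in> W N Parent (Child j) then f j k' else 0) else 0) else 0)"
      by (rule sum.cong[OF refl]) (auto simp: Pst that sum_distrib_left intro!: sum.cong)
    also have "\<dots> = (if s k = i then ptil K s lam k i *
      (\<Sum>k'\<in>Dest K t i. \<Sum>j\<in>N. if t k' \<in> W N Parent (Child j) then f j k' else 0) else 0)"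
      by (cases "s k = i") (auto intro!: sum.neutral simp: Dest_def sum.inter_filter[OF finK] sum_distrib_left intro!: sum.cong)
    finally show ?thesis .
  qed
  define B where "B k = (\<Sum>j\<in>N. if t k \<in> W N Parent (Child j) then thr j k else 0)" for k
  define F where "F i = (\<Sum>k\<in>Dest K t i. B k)" for i
  have steq: "thr i k = (if s k = i then ptil K s lam k i * F i else 0)" if "i\<in>S" "k\<in>K" for i k
  proof -
    have "thr i k = (\<Sum>k'\<in>K. \<Sum>j\<in>N. thr j k' * P j k' i k)"
      using c_iv that SN unfolding traffic_eqs_def by auto
    also have "\<dots> = (if s k = i then ptil K s lam k i * F i else 0)"
      unfolding gen[OF that] F_def B_def by simp
    finally show ?thesis .
  qed
  have lamt_nn: "lamt K s lam i \<ge> 0" for i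
    unfolding lamt_def Orig_def using cust_pos c_vi K_def
    by (intro sum_nonneg) (auto intro: less_imp_le)
  have lamt_pos: "lamt K s lam i > 0" if "i\<in>S" for i
  proof (rule ccontr)
    assume "\<not> lamt K s lam i > 0"
    with lamt_nn have z: "lamt K s lam i = 0" by (simp add: not_less order_antisym)
    have "thr i k = 0" if "k\<in>K" for k using steq[OF \<open>i\<in>S\<close> that] z by (simp add: ptil_def)
    then have "total_thr K thr i = 0" unfolding total_thr_def by simp
    with pi_station_pos that show False by auto
  qed
  have Bk: "B k = thr (s k) k" if "k\<in>K" for k
  proof -
    have tk: "t k \<in> S" using od that by auto
    have "thr (s k) k = (\<Sum>k'\<in>K. \<Sum>j\<in>N. thr j k * P j k (t k) k')" using c_iii that by auto
    also have "\<dots> = (\<Sum>k'\<in>K. if s k' = t k then ptil K s lam k' (t k) * B k else 0)"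
      unfolding B_def
      by (rule sum.cong[OF refl]) (auto simp: Pst tk that sum_distrib_left intro!: sum.cong)
    also have "\<dots> = (\<Sum>k'\<in>Orig K s (t k). ptil K s lam k' (t k)) * B k"
      by (auto simp add: Orig_def sum.inter_filter[OF finK] sum_distrib_right intro!: sum.cong)
    also have "(\<Sum>k'\<in>Orig K s (t k). ptil K s lam k' (t k)) = 1"
      using lamt_pos[OF tk] unfolding ptil_def by (simp add: sum_divide_distrib[symmetric] lamt_def[symmetric])
    finally show ?thesis by simp
  qed
  have tot: "total_thr K thr i = F i" if "i\<in>S" for i
  proof -
    have "total_thr K thr i = (\<Sum>k\<in>K. if s k = i then lam k / lamt K s lam i * F i else 0)"
      unfolding total_thr_def by (rule sum.cong[OF refl]) (simp add: steq that ptil_def)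
    also have "\<dots> = (\<Sum>k\<in>K. if s k = i then lam k else 0) * (F i / lamt K s lam i)"
      unfolding sum_distrib_right by (rule sum.cong[OF refl]) simp
    also have "\<dots> = (\<Sum>k\<in>Orig K s i. lam k) / lamt K s lam i * F i"
      by (simp add: Orig_def sum.inter_filter[OF finK])
    also have "\<dots> = F i" using lamt_pos[OF that] by (simp add: lamt_def[symmetric])
    finally show ?thesis .
  qed
  have gam_eq: "gam i = F i / lamt K s lam i" if "i\<in>S" for i
    using that tot unfolding gam_def gamma_def mu0_def by simp
  have Fpos: "F i > 0" if "i\<in>S" for i using tot pi_station_pos that by auto
  have gam_pos: "gam i > 0" if "i\<in>S" for i using gam_eq[OF that] Fpos[OF that] lamt_pos[OF that] by simp
  have Bk2: "B k = lam k * gam (s k)" if "k\<in>K" for k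
  proof -
    have sk: "s k \<in> S" using od that by auto
    show ?thesis using Bk[OF that] steq[OF sk that] gam_eq[OF sk] by (simp add: ptil_def)
  qed
  have E: "gam i * lamt K s lam i = (\<Sum>k\<in>Dest K t i. lam k * gam (s k))" if "i\<in>S" for i
  proof -
    have "gam i * lamt K s lam i = F i" using gam_eq[OF that] lamt_pos[OF that] by simp
    also have "\<dots> = (\<Sum>k\<in>Dest K t i. lam k * gam (s k))"
      unfolding F_def by (rule sum.cong[OF refl]) (simp add: Bk2 Dest_def)
    finally show ?thesis .
  qed
  show ?thesis
  proof
    assume all: "\<forall>i\<in>S. \<forall>j\<in>S. gam i = gam j"
    show "\<forall>i\<in>S. lamt K s lam i = (\<Sum>k\<in>Dest K t i. lam k)"
    proof
      fix i assume i: "i\<in>S"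
      have "(\<Sum>k\<in>Dest K t i. lam k * gam (s k)) = (\<Sum>k\<in>Dest K t i. lam k) * gam i"
        unfolding sum_distrib_right
      proof (intro sum.cong refl)
        fix k assume "k \<in> Dest K t i"
        then have "s k \<in> S" using od by (auto simp: Dest_def)
        then have "gam (s k) = gam i" using all i by blast
        then show "lam k * gam (s k) = lam k * gam i" by simp
      qed
      with E[OF i] gam_pos[OF i] show "lamt K s lam i = (\<Sum>k\<in>Dest K t i. lam k)" by simp
    qed
  next
    assume h: "\<forall>i\<in>S. lamt K s lam i = (\<Sum>k\<in>Dest K t i. lam k)"
    define thr' where "thr' i k = thr i k / gam (s k)" for i k
    have "traffic_eqs N K P thr'"
      unfolding traffic_eqs_def
    proof (intro ballI)
      fix i k assume i: "i\<in>N" and k: "k\<in>K"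
      have sk: "s k \<in> S" using od k by auto
      show "thr' i k = (\<Sum>k'\<in>K. \<Sum>j\<in>N. thr' j k' * P j k' i k)"
      proof (cases "i\<in>S")
        case True
        have inner: "(\<Sum>j\<in>N. if t k' \<in> W N Parent (Child j) then thr' j k' else 0) = lam k'"
          if "k'\<in>K" for k'
        proof -
          have "(\<Sum>j\<in>N. if t k' \<in> W N Parent (Child j) then thr' j k' else 0) = B k' / gam (s k')"
            unfolding B_def thr'_def sum_divide_distrib by (intro sum.cong) auto
          also have "\<dots> = lam k'" using Bk2[OF that] gam_pos[of "s k'"] od that by auto
          finally show ?thesis .
        qed
        have "(\<Sum>k'\<in>K. \<Sum>j\<in>N. thr' j k' * P j k' i k) = (if s k = i then ptil K s lam k i *
          (\<Sum>k'\<in>Dest K t i. lam k') else 0)"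
        proof -
          have "(\<Sum>k'\<in>Dest K t i. \<Sum>j\<in>N. if t k' \<in> W N Parent (Child j) then thr' j k' else 0)
              = (\<Sum>k'\<in>Dest K t i. lam k')"
            by (rule sum.cong[OF refl]) (rule inner, simp add: Dest_def)
          then show ?thesis unfolding gen[OF True k] by simp
        qed
        also have "\<dots> = (if s k = i then lam k else 0)"
          using h True lamt_pos[OF True] by (auto simp: ptil_def)
        also have "\<dots> = thr' i k"
          unfolding thr'_def using steq[OF True k] gam_eq[OF True] lamt_pos[OF True] Fpos[OF True]
          by (auto simp: ptil_def)
        finally show ?thesis by simp
      next
        case False
        have P0: "P j k' i k = 0" if "k'\<in>K" "k'\<noteq>k" for j k'
          using that od False unfolding P_def routing_def by auto
        have red: "(\<Sum>k'\<in>K. \<Sum>j\<in>N. f j k' * P j k' i k) = (\<Sum>j\<in>N. f j k * P j k i k)" for f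
        proof -
          have "(\<Sum>k'\<in>K. \<Sum>j\<in>N. f j k' * P j k' i k) = (\<Sum>j\<in>N. f j k * P j k i k)
              + (\<Sum>k'\<in>K-{k}. \<Sum>j\<in>N. f j k' * P j k' i k)"
            using sum.remove[OF finK k] by simp
          also have "(\<Sum>k'\<in>K-{k}. \<Sum>j\<in>N. f j k' * P j k' i k) = 0"
            by (intro sum.neutral) (auto simp: P0)
          finally show ?thesis by simp
        qed
        have "thr i k = (\<Sum>j\<in>N. thr j k * P j k i k)"
          using c_iv i k red[of thr] unfolding traffic_eqs_def by auto
        then show ?thesis unfolding red thr'_def
          by (simp add: sum_divide_distrib)
      qed
    qed
    then obtain c where c: "\<forall>i\<in>N. \<forall>k\<in>K. thr' i k = c * thr i k" using pi_unique by blast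
    have gc: "gam i = 1 / c" if i: "i\<in>S" for i
    proof -
      obtain k where k: "k\<in>K" "thr i k \<noteq> 0"
      proof (rule ccontr)
        assume "\<not> thesis"
        then have "\<forall>k\<in>K. thr i k = 0" using that by blast
        then have "total_thr K thr i = 0" unfolding total_thr_def by simp
        with pi_station_pos i show False by auto
      qed
      have ski: "s k = i" using steq[OF i k(1)] k(2) by (auto split: if_splits)
      have "thr i k / gam i = c * thr i k" using c i SN k ski unfolding thr'_def by auto
      then have "1 / gam i = c" using k(2) gam_pos[OF i] by (simp add: field_simps)
      then show ?thesis by auto
    qed
    show "\<forall>i\<in>S. \<forall>j\<in>S. gam i = gam j" using gc by simp
  qed
qed

end
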